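(* When all requests are scheduled by a Byzantine adversary, the algorithm's total RB cost and its total latency due to the $\mathcal{Q}$ good queries are each $$O\Big(\big(\mathcal{I}+\mathcal{Q}+\sqrt{(\mathcal{I}+\mathcal{Q})\,\mathcal{B}}\big)\,\ell_M^2\Big),$$ where this bound includes the cost of the good insertions.
   Context: Model. A hash table has $t$ indices with chaining. The objects at an index form a list, new objects are appended at the tail, and $L_i$ denotes the current number of objects in the list at index $i$. The depth of an object is its position counted from the head of its list (the head has depth $1$). Algorithm \textsc{Depth Charge}: - Inserting at index $i$ costs the inserter an RB (resource-burning) cost of $L_i+1$ and has latency $1$. - Querying a present object at depth $\Delta$ costs $\Delta$, has latency $\Delta$, and then moves the object to the head of its list. - Querying an absent object costs $L_i$. Good objects (inserted by clients) go to uniformly random indices; clients query only good objects. The adversary inserts bad objects at indices of its choice and may query any object. Notation. $\mathcal{I}$ is the number of good insertions. $\mathcal{Q}$ is the number of good queries for objects present in the table. $\mathcal{B}$ is the adversary's total RB cost. $\ell_M$ is the maximum, over indices, of the maximum number of good objects ever present in that index. *)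

theory Defs
  imports Complex_Main
begin

text \<open>Model of the hash table under algorithm Depth Charge.
  Objects are natural numbers, indices are naturals below t.
  The table maps each index to its list (head first).\<close>

datatype op =
    GIns nat nat      \<comment> \<open>good insertion of object x at index i\<close>
  | GQry nat nat      \<comment> \<open>good query of present object x, which lies at index i\<close>
  | BIns nat nat      \<comment> \<open>bad (adversarial) insertion of object x at index i\<close>
  | BQry nat nat      \<comment> \<open>adversarial query of present object x (good or bad) at index i\<close>
  | BQryAbs nat       \<comment> \<open>adversarial query of an absent object hashing to index i\<close>

record st =
  tab   :: "nat \<Rightarrow> nat list"
  goodobj :: "nat set"
  allobj  :: "nat set"
  algc  :: nat                  \<comment> \<open>RB cost paid by the algorithm on good requests\<close>
  lat   :: nat                  \<comment> \<open>latency of good requests\<close>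
  advc  :: nat                  \<comment> \<open>adversary's total RB cost (B)\<close>
  nI    :: nat                  \<comment> \<open>number of good insertions\<close>
  nQ    :: nat                  \<comment> \<open>number of good queries (of present objects)\<close>

definition init :: st where
  "init = \<lparr>tab = (\<lambda>_. []), goodobj = {}, allobj = {}, algc = 0, lat = 0,
           advc = 0, nI = 0, nQ = 0\<rparr>"

text \<open>Depth of x in list xs (head has depth 1).\<close>
definition depth :: "nat \<Rightarrow> nat list \<Rightarrow> nat" where
  "depth x xs = length (takeWhile (\<lambda>y. y \<noteq> x) xs) + 1"

definition mtf :: "nat \<Rightarrow> nat list \<Rightarrow> nat list" where
  "mtf x xs = x # remove1 x xs"

fun step :: "st \<Rightarrow> op \<Rightarrow> st" where
  "step s (GIns x i) = s\<lparr>tab := (tab s)(i := tab s i @ [x]),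
      goodobj := insert x (goodobj s), allobj := insert x (allobj s),
      algc := algc s + (length (tab s i) + 1), lat := lat s + 1, nI := nI s + 1\<rparr>"
| "step s (GQry x i) = s\<lparr>tab := (tab s)(i := mtf x (tab s i)),
      algc := algc s + depth x (tab s i), lat := lat s + depth x (tab s i),
      nQ := nQ s + 1\<rparr>"
| "step s (BIns x i) = s\<lparr>tab := (tab s)(i := tab s i @ [x]),
      allobj := insert x (allobj s), advc := advc s + (length (tab s i) + 1)\<rparr>"
| "step s (BQry x i) = s\<lparr>tab := (tab s)(i := mtf x (tab s i)),
      advc := advc s + depth x (tab s i)\<rparr>"
| "step s (BQryAbs i) = s\<lparr>advc := advc s + length (tab s i)\<rparr>"

fun legal :: "nat \<Rightarrow> st \<Rightarrow> op \<Rightarrow> bool" where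
  "legal t s (GIns x i) = (i < t \<and> x \<notin> allobj s)"
| "legal t s (GQry x i) = (i < t \<and> x \<in> goodobj s \<and> x \<in> set (tab s i))"
| "legal t s (BIns x i) = (i < t \<and> x \<notin> allobj s)"
| "legal t s (BQry x i) = (i < t \<and> x \<in> set (tab s i))"
| "legal t s (BQryAbs i) = (i < t)"

definition run :: "op list \<Rightarrow> st" where
  "run ops = fold (\<lambda>r s. step s r) ops init"

definition valid_run :: "nat \<Rightarrow> op list \<Rightarrow> bool" where
  "valid_run t ops = (\<forall>k < length ops. legal t (run (take k ops)) (ops ! k))"

text \<open>Maximum, over indices, of the number of good objects ever present
  at that index (there are no deletions, so this is the final count).\<close>
definition ellM :: "nat \<Rightarrow> st \<Rightarrow> nat" where
  "ellM t s = Max ((\<lambda>i. length (filter (\<lambda>x. x \<in> goodobj s) (tab s i))) ` {..<t})"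

end

theory Submission
  imports Defs
begin

definition gc :: "nat set \<Rightarrow> nat list \<Rightarrow> nat" where
  "gc G xs = length (filter (\<lambda>x. x \<in> G) xs)"
definition bc :: "nat set \<Rightarrow> nat list \<Rightarrow> nat" where
  "bc G xs = length (filter (\<lambda>x. x \<notin> G) xs)"
definition ba :: "nat \<Rightarrow> nat set \<Rightarrow> nat list \<Rightarrow> nat" where
  "ba x G xs = bc G (takeWhile (\<lambda>y. y \<noteq> x) xs)"

fun phiAux :: "nat set \<Rightarrow> nat \<Rightarrow> nat list \<Rightarrow> nat" where
  "phiAux G b [] = 0"
| "phiAux G b (y#ys) = (if y \<in> G then b^2 + phiAux G b ys else phiAux G (Suc b) ys)"

lemma gc_bc_len: "gc G xs + bc G xs = length xs"
  unfolding gc_def bc_def by (rule sum_length_filter_compl)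

lemma gc_cong: "\<forall>y\<in>set xs. (y\<in>G \<longleftrightarrow> y\<in>G') \<Longrightarrow> gc G xs = gc G' xs"
  unfolding gc_def by (metis (mono_tags, lifting) filter_cong)
lemma bc_cong: "\<forall>y\<in>set xs. (y\<in>G \<longleftrightarrow> y\<in>G') \<Longrightarrow> bc G xs = bc G' xs"
  unfolding bc_def by (metis (mono_tags, lifting) filter_cong)

lemma len_filter_remove1:
  "x \<in> set xs \<Longrightarrow> length (filter P (remove1 x xs)) + (if P x then 1 else 0) = length (filter P xs)"
  by (induction xs) auto

lemma gc_mtf: "x \<in> set xs \<Longrightarrow> gc G (mtf x xs) = gc G xs"
  unfolding gc_def mtf_def using len_filter_remove1[of x xs "\<lambda>x. x \<in> G"] by auto
lemma bc_mtf: "x \<in> set xs \<Longrightarrow> bc G (mtf x xs) = bc G xs"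
  unfolding bc_def mtf_def using len_filter_remove1[of x xs "\<lambda>x. x \<notin> G"] by auto

lemma phi_cong: "\<forall>y\<in>set xs. (y\<in>G \<longleftrightarrow> y\<in>G') \<Longrightarrow> phiAux G b xs = phiAux G' b xs"
  by (induction xs arbitrary: b) auto

lemma phi_app: "phiAux G b (xs@[x]) = phiAux G b xs + (if x\<in>G then (b + bc G xs)^2 else 0)"
proof (induction xs arbitrary: b)
  case Nil then show ?case by (simp add: bc_def)
next
  case (Cons y ys) then show ?case
    apply (cases "y \<in> G")
     apply (simp add: bc_def)
    apply (simp add: bc_def)
    done
qed

lemma phi_remove_good: "x \<in> G \<Longrightarrow> x \<in> set xs \<Longrightarrow>
   phiAux G b (remove1 x xs) + (b + ba x G xs)^2 = phiAux G b xs"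
proof (induction xs arbitrary: b)
  case Nil then show ?case by simp
next
  case (Cons y ys)
  show ?case
  proof (cases "y = x")
    case True then show ?thesis using Cons by (simp add: ba_def bc_def)
  next
    case False
    then have xin: "x \<in> set ys" using Cons by simp
    show ?thesis
    proof (cases "y \<in> G")
      case True
      then show ?thesis using Cons(1)[OF Cons(2) xin, of b] False by (simp add: ba_def bc_def)
    next
      case nG: False
      then show ?thesis using Cons(1)[OF Cons(2) xin, of "Suc b"] False by (simp add: ba_def bc_def)
    qed
  qed
qed

lemma phi_remove_bad: "x \<notin> G \<Longrightarrow> x \<in> set xs \<Longrightarrow>
   phiAux G (Suc b) (remove1 x xs) \<le> phiAux G b xs + 2 * gc G xs * (b + depth x xs)"
proof (induction xs arbitrary: b)
  case Nil then show ?case by simp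
next
  case (Cons y ys)
  show ?case
  proof (cases "y = x")
    case True then show ?thesis using Cons by simp
  next
    case False
    then have xin: "x \<in> set ys" using Cons by simp
    have dep: "depth x (y#ys) = Suc (depth x ys)" using False by (simp add: depth_def)
    show ?thesis
    proof (cases "y \<in> G")
      case True
      have IH: "phiAux G (Suc b) (remove1 x ys) \<le> phiAux G b ys + 2 * gc G ys * (b + depth x ys)"
        using Cons xin by blast
      have g: "gc G (y#ys) = Suc (gc G ys)" using True by (simp add: gc_def)
      have "(Suc b)^2 \<le> b^2 + 2 * (b + Suc (depth x ys))" by (simp add: power2_eq_square)
      moreover have "2 * gc G ys * (b + depth x ys) \<le> 2 * gc G ys * (b + Suc (depth x ys))" by simp
      have "phiAux G (Suc b) (remove1 x (y#ys)) = (Suc b)^2 + phiAux G (Suc b) (remove1 x ys)"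
        using True False by simp
      moreover have "phiAux G b (y#ys) = b^2 + phiAux G b ys" using True by simp
      ultimately show ?thesis using IH g dep \<open>(Suc b)^2 \<le> _\<close> \<open>2 * gc G ys * _ \<le> _\<close>
        by (simp add: algebra_simps)
    next
      case nG: False
      have IH: "phiAux G (Suc (Suc b)) (remove1 x ys) \<le> phiAux G (Suc b) ys + 2 * gc G ys * (Suc b + depth x ys)"
        using Cons xin by blast
      have g: "gc G (y#ys) = gc G ys" using nG by (simp add: gc_def)
      show ?thesis using IH nG False g dep by simp
    qed
  qed
qed

lemma tw_gc: "x \<in> G \<Longrightarrow> x \<in> set xs \<Longrightarrow> gc G (takeWhile (\<lambda>y. y\<noteq>x) xs) + 1 \<le> gc G xs"
proof (induction xs)
  case Nil then show ?case by simp
next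
  case (Cons y ys)
  show ?case
  proof (cases "y = x")
    case True then show ?thesis using Cons by (simp add: gc_def)
  next
    case False
    then have "x \<in> set ys" using Cons by simp
    then show ?thesis using Cons False by (simp add: gc_def)
  qed
qed

lemma depth_le: "x \<in> G \<Longrightarrow> x \<in> set xs \<Longrightarrow> depth x xs \<le> gc G xs + ba x G xs"
  using tw_gc[of x G xs] gc_bc_len[of G "takeWhile (\<lambda>y. y\<noteq>x) xs"]
  by (simp add: depth_def ba_def)

lemma cs_step: fixes A N S a :: nat
  assumes "A^2 \<le> N*S" shows "(A+a)^2 \<le> (N+1)*(S+a^2)"
proof (cases "N = 0")
  case True then show ?thesis using assms by simp
next
  case False
  have "N * (2*A*a) \<le> N*N*a^2 + A^2"
  proof -
    have "(real N * a - A)^2 \<ge> 0" by simp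
    then have "real N * (2*A*a) \<le> real N * N * a^2 + real A^2" by (simp add: power2_eq_square algebra_simps)
    then show ?thesis by (metis of_nat_le_iff of_nat_add of_nat_mult of_nat_power of_nat_numeral)
  qed
  also have "\<dots> \<le> N*N*a^2 + N*S" using assms by simp
  finally have "N * (2*A*a) \<le> N * (N*a^2 + S)" by (simp add: algebra_simps)
  then have "2*A*a \<le> N*a^2 + S" using False by simp
  then show ?thesis using assms by (simp add: power2_eq_square algebra_simps)
qed

lemma sum_upd:
  assumes "i < (t::nat)" "\<And>j. j < t \<Longrightarrow> j \<noteq> i \<Longrightarrow> f j = g j"
  shows "sum g {..<t} + f i = sum f {..<t} + (g i :: nat)"
proof -
  have "sum f {..<t} = f i + sum f ({..<t} - {i})" using assms(1) by (simp add: sum.remove)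
  moreover have "sum g {..<t} = g i + sum g ({..<t} - {i})" using assms(1) by (simp add: sum.remove)
  moreover have "sum f ({..<t} - {i}) = sum g ({..<t} - {i})" using assms(2) by (intro sum.cong) auto
  ultimately show ?thesis by simp
qed

definition Phi :: "nat \<Rightarrow> st \<Rightarrow> nat" where
  "Phi t s = (\<Sum>i<t. phiAux (goodobj s) 0 (tab s i))"
definition Psi :: "nat \<Rightarrow> nat \<Rightarrow> st \<Rightarrow> nat" where
  "Psi t L s = (\<Sum>i<t. 2 * (L - gc (goodobj s) (tab s i)) * bc (goodobj s) (tab s i)^2)"
definition WF :: "st \<Rightarrow> bool" where
  "WF s = ((\<forall>i. set (tab s i) \<subseteq> allobj s) \<and> goodobj s \<subseteq> allobj s)"
definition Inv :: "nat \<Rightarrow> nat \<Rightarrow> st \<Rightarrow> bool" where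
  "Inv t L s = (\<exists>A S. algc s \<le> (nI s + nQ s) * L + A \<and> A^2 \<le> (nI s + nQ s) * S
      \<and> S + Phi t s + Psi t L s \<le> 4 * L * advc s \<and> lat s \<le> algc s)"

lemma inv_GIns:
  assumes wf: "WF s" and leg: "i < t" "x \<notin> allobj s"
    and gL: "\<forall>j<t. gc (goodobj (step s (GIns x i))) (tab (step s (GIns x i)) j) \<le> L"
    and inv: "Inv t L s"
  shows "Inv t L (step s (GIns x i))"
proof -
  obtain A S where AS: "algc s \<le> (nI s + nQ s) * L + A" "A^2 \<le> (nI s + nQ s) * S"
      "S + Phi t s + Psi t L s \<le> 4 * L * advc s" "lat s \<le> algc s"
    using inv unfolding Inv_def by blast
  define G where "G = goodobj s"
  define xs where "xs = tab s i"
  define a where "a = bc G xs"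
  define g where "g = gc G xs"
  have xnot: "\<And>j. \<forall>y\<in>set (tab s j). (y \<in> insert x G \<longleftrightarrow> y \<in> G)"
    using wf leg unfolding WF_def by auto
  have gx: "gc (insert x G) (xs @ [x]) = g + 1"
    using gc_cong[OF xnot[of i]] unfolding g_def xs_def by (simp add: gc_def)
  have bx: "bc (insert x G) (xs @ [x]) = a"
    using bc_cong[OF xnot[of i]] unfolding a_def xs_def by (simp add: bc_def)
  have bx0: "bc (insert x G) xs = a"
    using bc_cong[OF xnot[of i]] unfolding a_def xs_def by simp
  have gi: "g + 1 \<le> L" using gL[rule_format, OF leg(1)] gx by (simp add: G_def xs_def)
  have cost: "length xs + 1 \<le> L + a" using gc_bc_len[of G xs] gi unfolding a_def g_def by simp
  have phi0: "(\<Sum>j<t. phiAux (insert x G) 0 (((tab s)(i:=xs@[x])) j)) + phiAux G 0 (tab s i)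
      = (\<Sum>j<t. phiAux G 0 (tab s j)) + phiAux (insert x G) 0 (((tab s)(i:=xs@[x])) i)"
    by (rule sum_upd[OF leg(1)]) (use phi_cong[OF xnot] in auto)
  have phi: "Phi t (step s (GIns x i)) = Phi t s + a^2"
    using phi0 phi_app[of "insert x G" 0 xs x] phi_cong[OF xnot[of i], of 0]
    unfolding Phi_def by (simp add: G_def[symmetric] xs_def[symmetric] bx0)
  have psi0: "(\<Sum>j<t. 2 * (L - gc (insert x G) (((tab s)(i:=xs@[x])) j)) * bc (insert x G) (((tab s)(i:=xs@[x])) j)^2)
      + 2 * (L - gc G (tab s i)) * bc G (tab s i)^2
      = (\<Sum>j<t. 2 * (L - gc G (tab s j)) * bc G (tab s j)^2)
      + 2 * (L - gc (insert x G) (((tab s)(i:=xs@[x])) i)) * bc (insert x G) (((tab s)(i:=xs@[x])) i)^2"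
    by (rule sum_upd[OF leg(1)]) (use gc_cong[OF xnot] bc_cong[OF xnot] in auto)
  have psi: "Psi t L (step s (GIns x i)) + 2 * (L - g) * a^2 = Psi t L s + 2 * (L - (g+1)) * a^2"
    using psi0 gx bx unfolding Psi_def by (simp add: G_def[symmetric] xs_def[symmetric] a_def g_def)
  have psi2: "2 * (L - g) * a^2 = 2 * (L - (g+1)) * a^2 + 2 * a^2"
  proof -
    have "L - g = (L - (g+1)) + 1" using gi by simp
    then show ?thesis by (simp add: algebra_simps)
  qed
  let ?s = "step s (GIns x i)"
  have "algc ?s \<le> (nI ?s + nQ ?s) * L + (A + a)" using AS(1) cost by (simp add: xs_def)
  moreover have "(A+a)^2 \<le> (nI ?s + nQ ?s) * (S + a^2)" using cs_step[OF AS(2)] by simp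
  moreover have "(S + a^2) + Phi t ?s + Psi t L ?s \<le> 4 * L * advc ?s"
    using AS(3) phi psi psi2 by simp
  moreover have "lat ?s \<le> algc ?s" using AS(4) by simp
  ultimately show ?thesis unfolding Inv_def by blast
qed

lemma inv_GQry:
  assumes leg: "i < t" "x \<in> goodobj s" "x \<in> set (tab s i)"
    and gL: "\<forall>j<t. gc (goodobj (step s (GQry x i))) (tab (step s (GQry x i)) j) \<le> L"
    and inv: "Inv t L s"
  shows "Inv t L (step s (GQry x i))"
proof -
  obtain A S where AS: "algc s \<le> (nI s + nQ s) * L + A" "A^2 \<le> (nI s + nQ s) * S"
      "S + Phi t s + Psi t L s \<le> 4 * L * advc s" "lat s \<le> algc s"
    using inv unfolding Inv_def by blast
  define G where "G = goodobj s"
  define xs where "xs = tab s i"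
  define a where "a = ba x G xs"
  have xG: "x \<in> G" and xin: "x \<in> set xs" using leg by (auto simp: G_def xs_def)
  have gi: "gc G xs \<le> L" using gL[rule_format, OF leg(1)] gc_mtf[OF xin, of G]
    by (simp add: G_def xs_def)
  have cost: "depth x xs \<le> L + a" using depth_le[OF xG xin] gi unfolding a_def by simp
  have phi0: "(\<Sum>j<t. phiAux G 0 (((tab s)(i:=mtf x xs)) j)) + phiAux G 0 (tab s i)
      = (\<Sum>j<t. phiAux G 0 (tab s j)) + phiAux G 0 (((tab s)(i:=mtf x xs)) i)"
    by (rule sum_upd[OF leg(1)]) auto
  have pm: "phiAux G 0 (mtf x xs) + a^2 = phiAux G 0 xs"
    using phi_remove_good[OF xG xin, of 0] xG unfolding a_def mtf_def by simp
  have phi: "Phi t (step s (GQry x i)) + a^2 = Phi t s"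
    using phi0 pm unfolding Phi_def by (simp add: G_def[symmetric] xs_def[symmetric])
  have psi: "Psi t L (step s (GQry x i)) = Psi t L s"
    unfolding Psi_def using gc_mtf[OF xin] bc_mtf[OF xin]
    by (intro sum.cong) (auto simp: G_def[symmetric] xs_def[symmetric])
  let ?s = "step s (GQry x i)"
  have "algc ?s \<le> (nI ?s + nQ ?s) * L + (A + a)" using AS(1) cost by (simp add: xs_def)
  moreover have "(A+a)^2 \<le> (nI ?s + nQ ?s) * (S + a^2)" using cs_step[OF AS(2)] by simp
  moreover have "(S + a^2) + Phi t ?s + Psi t L ?s \<le> 4 * L * advc ?s"
    using AS(3) phi psi by simp
  moreover have "lat ?s \<le> algc ?s" using AS(4) by simp
  ultimately show ?thesis unfolding Inv_def by blast
qed

lemma inv_BIns: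
  assumes wf: "WF s" and leg: "i < t" "x \<notin> allobj s"
    and inv: "Inv t L s"
  shows "Inv t L (step s (BIns x i))"
proof -
  obtain A S where AS: "algc s \<le> (nI s + nQ s) * L + A" "A^2 \<le> (nI s + nQ s) * S"
      "S + Phi t s + Psi t L s \<le> 4 * L * advc s" "lat s \<le> algc s"
    using inv unfolding Inv_def by blast
  define G where "G = goodobj s"
  define xs where "xs = tab s i"
  define a where "a = bc G xs"
  define g where "g = gc G xs"
  have xG: "x \<notin> G" using wf leg unfolding WF_def G_def by auto
  have gx: "gc G (xs@[x]) = g" using xG by (simp add: gc_def g_def)
  have bx: "bc G (xs@[x]) = a + 1" using xG by (simp add: bc_def a_def)
  have alen: "a \<le> length xs" using gc_bc_len[of G xs] unfolding a_def by simp
  have phi0: "(\<Sum>j<t. phiAux G 0 (((tab s)(i:=xs@[x])) j)) + phiAux G 0 (tab s i)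
      = (\<Sum>j<t. phiAux G 0 (tab s j)) + phiAux G 0 (((tab s)(i:=xs@[x])) i)"
    by (rule sum_upd[OF leg(1)]) auto
  have phi: "Phi t (step s (BIns x i)) = Phi t s"
    using phi0 phi_app[of G 0 xs x] xG unfolding Phi_def by (simp add: G_def[symmetric] xs_def[symmetric])
  have psi0: "(\<Sum>j<t. 2 * (L - gc G (((tab s)(i:=xs@[x])) j)) * bc G (((tab s)(i:=xs@[x])) j)^2)
      + 2 * (L - gc G (tab s i)) * bc G (tab s i)^2
      = (\<Sum>j<t. 2 * (L - gc G (tab s j)) * bc G (tab s j)^2)
      + 2 * (L - gc G (((tab s)(i:=xs@[x])) i)) * bc G (((tab s)(i:=xs@[x])) i)^2"
    by (rule sum_upd[OF leg(1)]) auto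
  have psi: "Psi t L (step s (BIns x i)) + 2 * (L - g) * a^2 = Psi t L s + 2 * (L - g) * (a+1)^2"
    using psi0 gx bx unfolding Psi_def by (simp add: G_def[symmetric] xs_def[symmetric] a_def g_def)
  have key: "2 * (L - g) * (a+1)^2 \<le> 2 * (L - g) * a^2 + 4 * L * (length xs + 1)"
  proof -
    have "\<And>k::nat. 2 * k * (a+1)^2 = 2 * k * a^2 + 2 * k * (2*a+1)"
      by (simp add: power2_eq_square algebra_simps)
    then have "2 * (L - g) * (a+1)^2 = 2 * (L - g) * a^2 + 2 * (L - g) * (2*a+1)" .
    moreover have "(L - g) * (2*a+1) \<le> L * (2 * (length xs + 1))"
      using alen by (intro mult_mono) auto
    ultimately show ?thesis by simp
  qed
  let ?s = "step s (BIns x i)"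
  have "algc ?s \<le> (nI ?s + nQ ?s) * L + A" using AS(1) by simp
  moreover have "A^2 \<le> (nI ?s + nQ ?s) * S" using AS(2) by simp
  moreover have "S + Phi t ?s + Psi t L ?s \<le> 4 * L * advc ?s"
    using AS(3) phi psi key by (simp add: xs_def algebra_simps)
  moreover have "lat ?s \<le> algc ?s" using AS(4) by simp
  ultimately show ?thesis unfolding Inv_def by blast
qed

lemma inv_BQry:
  assumes leg: "i < t" "x \<in> set (tab s i)"
    and gL: "\<forall>j<t. gc (goodobj (step s (BQry x i))) (tab (step s (BQry x i)) j) \<le> L"
    and inv: "Inv t L s"
  shows "Inv t L (step s (BQry x i))"
proof -
  obtain A S where AS: "algc s \<le> (nI s + nQ s) * L + A" "A^2 \<le> (nI s + nQ s) * S"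
      "S + Phi t s + Psi t L s \<le> 4 * L * advc s" "lat s \<le> algc s"
    using inv unfolding Inv_def by blast
  define G where "G = goodobj s"
  define xs where "xs = tab s i"
  define d where "d = depth x xs"
  have xin: "x \<in> set xs" using leg by (auto simp: xs_def)
  have gi: "gc G xs \<le> L" using gL[rule_format, OF leg(1)] gc_mtf[OF xin, of G]
    by (simp add: G_def xs_def)
  have pm: "phiAux G 0 (mtf x xs) \<le> phiAux G 0 xs + 2 * L * d"
  proof (cases "x \<in> G")
    case True
    then show ?thesis using phi_remove_good[OF True xin, of 0] unfolding mtf_def by simp
  next
    case False
    have "phiAux G 0 (mtf x xs) = phiAux G (Suc 0) (remove1 x xs)" using False by (simp add: mtf_def)
    also have "\<dots> \<le> phiAux G 0 xs + 2 * gc G xs * d"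
      using phi_remove_bad[OF False xin, of 0] unfolding d_def by simp
    also have "\<dots> \<le> phiAux G 0 xs + 2 * L * d" using gi by simp
    finally show ?thesis .
  qed
  have phi0: "(\<Sum>j<t. phiAux G 0 (((tab s)(i:=mtf x xs)) j)) + phiAux G 0 (tab s i)
      = (\<Sum>j<t. phiAux G 0 (tab s j)) + phiAux G 0 (((tab s)(i:=mtf x xs)) i)"
    by (rule sum_upd[OF leg(1)]) auto
  have phi: "Phi t (step s (BQry x i)) \<le> Phi t s + 2 * L * d"
    using phi0 pm unfolding Phi_def by (simp add: G_def[symmetric] xs_def[symmetric])
  have psi: "Psi t L (step s (BQry x i)) = Psi t L s"
    unfolding Psi_def using gc_mtf[OF xin] bc_mtf[OF xin]
    by (intro sum.cong) (auto simp: G_def[symmetric] xs_def[symmetric])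
  let ?s = "step s (BQry x i)"
  have "algc ?s \<le> (nI ?s + nQ ?s) * L + A" using AS(1) by simp
  moreover have "A^2 \<le> (nI ?s + nQ ?s) * S" using AS(2) by simp
  moreover have "S + Phi t ?s + Psi t L ?s \<le> 4 * L * advc ?s"
    using AS(3) phi psi by (simp add: xs_def d_def algebra_simps)
  moreover have "lat ?s \<le> algc ?s" using AS(4) by simp
  ultimately show ?thesis unfolding Inv_def by blast
qed

lemma inv_BQryAbs:
  assumes inv: "Inv t L s"
  shows "Inv t L (step s (BQryAbs i))"
proof -
  obtain A S where AS: "algc s \<le> (nI s + nQ s) * L + A" "A^2 \<le> (nI s + nQ s) * S"
      "S + Phi t s + Psi t L s \<le> 4 * L * advc s" "lat s \<le> algc s"
    using inv unfolding Inv_def by blast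
  have "Phi t (step s (BQryAbs i)) = Phi t s" "Psi t L (step s (BQryAbs i)) = Psi t L s"
    by (simp_all add: Phi_def Psi_def)
  then show ?thesis unfolding Inv_def using AS
    by (intro exI[of _ A] exI[of _ S]) (simp add: algebra_simps add_mono order_trans[OF AS(3)])
qed

lemma gc_ins: "gc G xs \<le> gc (insert x G) xs"
  unfolding gc_def by (induction xs) auto

lemma set_mtf: assumes "x \<in> set xs" shows "set (mtf x xs) = set xs"
proof
  show "set (mtf x xs) \<subseteq> set xs" using assms set_remove1_subset[of x xs] by (auto simp: mtf_def)
  show "set xs \<subseteq> set (mtf x xs)"
  proof
    fix y assume "y \<in> set xs"
    then show "y \<in> set (mtf x xs)"
      by (cases "y = x") (auto simp: mtf_def)
  qed
qed

lemma wf_step: assumes "WF s" "legal t s op"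
  shows "WF (step s op) \<and> (\<forall>j. gc (goodobj s) (tab s j) \<le> gc (goodobj (step s op)) (tab (step s op) j))"
proof (cases op)
  case (GIns x i)
  have "\<forall>j. gc (goodobj s) (tab s j) \<le> gc (insert x (goodobj s)) (((tab s)(i := tab s i @ [x])) j)"
  proof
    fix j show "gc (goodobj s) (tab s j) \<le> gc (insert x (goodobj s)) (((tab s)(i := tab s i @ [x])) j)"
      using gc_ins[of "goodobj s" "tab s j" x] by (auto simp: gc_def)
  qed
  then show ?thesis using assms GIns unfolding WF_def by auto
next
  case (GQry x i)
  then show ?thesis using assms set_mtf[of x "tab s i"] gc_mtf[of x "tab s i"] unfolding WF_def by auto
next
  case (BIns x i)
  then show ?thesis using assms unfolding WF_def by (auto simp: gc_def)
next
  case (BQry x i)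
  then show ?thesis using assms set_mtf[of x "tab s i"] gc_mtf[of x "tab s i"] unfolding WF_def by auto
next
  case (BQryAbs i)
  then show ?thesis using assms unfolding WF_def by auto
qed

lemma mono_step: assumes "legal t s op"
  shows "\<forall>j. gc (goodobj s) (tab s j) \<le> gc (goodobj (step s op)) (tab (step s op) j)"
proof (cases op)
  case (GIns x i)
  show ?thesis
  proof
    fix j show "gc (goodobj s) (tab s j) \<le> gc (goodobj (step s op)) (tab (step s op) j)"
      using gc_ins[of "goodobj s" "tab s j" x] GIns by (auto simp: gc_def)
  qed
next
  case (GQry x i)
  then show ?thesis using assms gc_mtf[of x "tab s i"] by auto
next
  case (BIns x i)
  then show ?thesis using assms by (auto simp: gc_def)
next
  case (BQry x i)
  then show ?thesis using assms gc_mtf[of x "tab s i"] by auto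
next
  case (BQryAbs i)
  then show ?thesis by auto
qed

lemma inv_step: assumes "WF s" "legal t s op" "Inv t L s"
  "\<forall>j<t. gc (goodobj (step s op)) (tab (step s op) j) \<le> L"
  shows "Inv t L (step s op)"
proof (cases op)
  case (GIns x i) then show ?thesis using assms inv_GIns by auto
next
  case (GQry x i) then show ?thesis using assms inv_GQry by auto
next
  case (BIns x i) then show ?thesis using assms inv_BIns by auto
next
  case (BQry x i) then show ?thesis using assms inv_BQry by auto
next
  case (BQryAbs i) then show ?thesis using assms inv_BQryAbs by auto
qed

lemma run_snoc: "run (ops @ [op]) = step (run ops) op"
  unfolding run_def by simp

lemma valid_snoc: "valid_run t (ops @ [op]) \<Longrightarrow> valid_run t ops \<and> legal t (run ops) op"
  unfolding valid_run_def
proof (intro conjI allI impI)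
  assume h: "\<forall>k<length (ops @ [op]). legal t (run (take k (ops @ [op]))) ((ops @ [op]) ! k)"
  fix k assume "k < length ops"
  then show "legal t (run (take k ops)) (ops ! k)" using h[rule_format, of k] by (simp add: nth_append)
next
  assume h: "\<forall>k<length (ops @ [op]). legal t (run (take k (ops @ [op]))) ((ops @ [op]) ! k)"
  then show "legal t (run ops) op" using h[rule_format, of "length ops"] by simp
qed

lemma main: "valid_run t ops \<Longrightarrow> (\<forall>i<t. gc (goodobj (run ops)) (tab (run ops) i) \<le> L)
   \<Longrightarrow> WF (run ops) \<and> Inv t L (run ops)"
proof (induction ops rule: rev_induct)
  case Nil
  have "Phi t init = 0" "Psi t L init = 0" by (simp_all add: Phi_def Psi_def init_def bc_def)
  then show ?case unfolding run_def WF_def Inv_def by (simp add: init_def)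
next
  case (snoc op ops)
  have v: "valid_run t ops" "legal t (run ops) op" using valid_snoc[OF snoc.prems(1)] by auto
  have g: "\<forall>i<t. gc (goodobj (step (run ops) op)) (tab (step (run ops) op) i) \<le> L"
    using snoc.prems(2) by (simp add: run_snoc)
  have mono: "\<forall>j. gc (goodobj (run ops)) (tab (run ops) j) \<le> gc (goodobj (step (run ops) op)) (tab (step (run ops) op) j)"
    using mono_step[OF v(2)] .
  have "\<forall>i<t. gc (goodobj (run ops)) (tab (run ops) i) \<le> L" using mono g order_trans by blast
  then have IH: "WF (run ops) \<and> Inv t L (run ops)" using snoc.IH v(1) by blast
  then have wfo: "WF (run ops)" by simp
  show ?case using inv_step[OF wfo v(2) _ g] IH wf_step[OF wfo v(2)] by (simp add: run_snoc)
qed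

lemma final_arith:
  fixes al A S N L B :: nat
  assumes "al \<le> N * L + A" "A^2 \<le> N * S" "S \<le> 4 * L * B"
  shows "real al \<le> 2 * (real N + sqrt (real N * real B)) * real L ^ 2"
proof -
  have A2: "real A ^ 2 \<le> 4 * real L * (real N * real B)"
  proof -
    have "A^2 \<le> N * (4 * L * B)" using assms(2,3) by (meson le_trans mult_le_mono2)
    then have "real (A^2) \<le> real (N * (4 * L * B))" by (simp only: of_nat_le_iff)
    then show ?thesis by (simp add: algebra_simps)
  qed
  have "real A \<le> sqrt (4 * real L * (real N * real B))" using A2 by (rule real_le_rsqrt)
  also have "\<dots> = 2 * sqrt (real L) * sqrt (real N * real B)"
    by (simp add: real_sqrt_mult)
  also have "\<dots> \<le> 2 * real L ^ 2 * sqrt (real N * real B)"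
  proof -
    have "sqrt (real L) \<le> real L ^ 2"
    proof (cases "L = 0")
      case True then show ?thesis by simp
    next
      case False
      then have "1 \<le> real L" by simp
      then have "sqrt (real L) \<le> real L" 
      proof -
        have s1: "1 \<le> sqrt (real L)" using \<open>1 \<le> real L\<close> by simp
        have "sqrt (real L) * 1 \<le> sqrt (real L) * sqrt (real L)"
          using s1 by (intro mult_left_mono) auto
        also have "\<dots> = real L" by simp
        finally show ?thesis by simp
      qed
      also have "real L \<le> real L ^ 2" using \<open>1 \<le> real L\<close> by (simp add: power2_eq_square)
      finally show ?thesis .
    qed
    then show ?thesis by (intro mult_right_mono) auto
  qed
  finally have hA: "real A \<le> 2 * real L ^ 2 * sqrt (real N * real B)" .
  have hN: "real N * real L \<le> real N * real L ^ 2"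
    by (intro mult_left_mono) (cases "L = 0", auto simp: power2_eq_square)
  have "real al \<le> real N * real L + real A" using assms(1) by (metis of_nat_add of_nat_le_iff of_nat_mult)
  also have "\<dots> \<le> 2 * (real N + sqrt (real N * real B)) * real L ^ 2"
  proof -
    have e: "2 * (real N + sqrt (real N * real B)) * real L ^ 2
        = 2 * (real N * real L ^ 2) + 2 * real L ^ 2 * sqrt (real N * real B)"
      by (simp add: algebra_simps)
    have "0 \<le> real N * real L ^ 2" by simp
    then show ?thesis using hA hN e by linarith
  qed
  finally show ?thesis .
qed

theorem lemma7:
  "\<exists>c > (0::real). \<forall>t ops. 0 < t \<longrightarrow> valid_run t ops \<longrightarrow>
     (let s = run ops; N = real (nI s) + real (nQ s);
          bound = c * (N + sqrt (N * real (advc s))) * real (ellM t s) ^ 2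
      in real (algc s) \<le> bound \<and> real (lat s) \<le> bound)"
proof (intro exI[of _ 2] conjI allI impI)
  fix t ops assume t: "0 < (t::nat)" and v: "valid_run t ops"
  define s where "s = run ops"
  define L where "L = ellM t s"
  have g: "\<forall>i<t. gc (goodobj s) (tab s i) \<le> L"
    unfolding L_def ellM_def gc_def by (auto intro: Max_ge)
  then have "Inv t L s" using main[OF v] unfolding s_def by blast
  then obtain A S where AS: "algc s \<le> (nI s + nQ s) * L + A" "A^2 \<le> (nI s + nQ s) * S"
      "S + Phi t s + Psi t L s \<le> 4 * L * advc s" "lat s \<le> algc s"
    unfolding Inv_def by blast
  have S: "S \<le> 4 * L * advc s" using AS(3) by simp
  have b: "real (algc s) \<le> 2 * (real (nI s + nQ s) + sqrt (real (nI s + nQ s) * real (advc s))) * real L ^ 2"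
    using final_arith[OF AS(1) AS(2) S] .
  have "real (lat s) \<le> real (algc s)" using AS(4) by simp
  then show "let s = run ops; N = real (nI s) + real (nQ s);
          bound = 2 * (N + sqrt (N * real (advc s))) * real (ellM t s) ^ 2
      in real (algc s) \<le> bound \<and> real (lat s) \<le> bound"
    using b unfolding Let_def s_def[symmetric] L_def[symmetric] by simp
qed simp

end
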